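(* Let $X=\{0,1\}^{\mathbb Z}$, $\mu=(\tfrac12,\tfrac12)^{\mathbb Z}$, $T$ the two-sided shift, and $d(x,x')=\sum_{k\in\mathbb Z}2^{-|k|-2}|x_k-x'_k|$. Consider $\mathbf X=\mathbf Y=(X,d,\mu,T)$ and choose dense anchor families in $X$ whose first anchor, in both coordinates, is the all-zero sequence $0^\infty$. Then for every $p\ge1$, $\widetilde{\mathrm{Dep}}_{1,1,1,p}(\mathbf X,\mathbf Y)>0$.
   Context: $\mathcal J(T,T)$: Borel probability measures on $X\times X$ with both marginals $\mu$ invariant under $T\times T$. With anchors $(a_r)$, $(b_r)$, for $z_i=(x_i,y_i)$: $\widetilde{\mathcal D}^X_{n,m,R}=\bigl((d(T^ax_i,T^bx_j))_{1\le i,j\le n,0\le a,b<m},(d(T^ax_i,a_r))_{1\le i\le n,0\le a<m,1\le r\le R}\bigr)$, $\widetilde{\mathcal D}^Y_{n,m,R}$ analogously with $y_i$ and $b_r$, $\widetilde\Phi_{n,m,R}(\lambda)=\mathrm{Law}_{\lambda^{\otimes n}}(\widetilde{\mathcal D}^X_{n,m,R},\widetilde{\mathcal D}^Y_{n,m,R})$, and $\widetilde{\mathrm{Dep}}_{n,m,R,p}(\mathbf X,\mathbf Y)=\sup_{\lambda\in\mathcal J(T,T)}W_p(\widetilde\Phi_{n,m,R}(\lambda),\widetilde\Phi_{n,m,R}(\mu\otimes\mu))$, where $W_p$ is the $p$-Wasserstein distance on the finite array cube with a fixed product Euclidean metric. *)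

theory Defs
  imports "HOL-Probability.Probability"
begin

type_synonym bseq = "int \<Rightarrow> bool"

definition bern_meas :: "bseq measure" where
  "bern_meas = PiM UNIV (\<lambda>_::int. measure_pmf (bernoulli_pmf (1/2)))"

definition shift :: "bseq \<Rightarrow> bseq" where
  "shift x = (\<lambda>k. x (k + 1))"

definition cantor_dist :: "bseq \<Rightarrow> bseq \<Rightarrow> real" where
  "cantor_dist x x' = infsum (\<lambda>k::int. 2 powr (- \<bar>real_of_int k\<bar> - 2)
        * \<bar>(of_bool (x k) :: real) - of_bool (x' k)\<bar>) UNIV"

definition dense_anchors :: "('a \<Rightarrow> 'a \<Rightarrow> real) \<Rightarrow> (nat \<Rightarrow> 'a) \<Rightarrow> bool" where
  "dense_anchors d a \<longleftrightarrow> (\<forall>x \<epsilon>. \<epsilon> > 0 \<longrightarrow> (\<exists>r\<ge>1. d x (a r) < \<epsilon>))"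

definition joinings :: "'a measure \<Rightarrow> ('a \<Rightarrow> 'a) \<Rightarrow> ('a \<times> 'a) measure set" where
  "joinings M T = {l. prob_space l \<and> sets l = sets (M \<Otimes>\<^sub>M M)
      \<and> distr l M fst = M \<and> distr l M snd = M
      \<and> distr l (M \<Otimes>\<^sub>M M) (map_prod T T) = l}"

text \<open>Index set of one array D_{n,m,R}: keys [0,i,j,a,b] for d(T^a x_i, T^b x_j) and
  [1,i,a,r] for d(T^a x_i, a_r) (indices i,j shifted to start at 0, a,b < m, 1<=r<=R).\<close>
definition Dkeys :: "nat \<Rightarrow> nat \<Rightarrow> nat \<Rightarrow> nat list set" where
  "Dkeys n m R = {[0,i,j,a,b] | i j a b. i < n \<and> j < n \<and> a < m \<and> b < m}
      \<union> {[1,i,a,r] | i a r. i < n \<and> a < m \<and> 1 \<le> r \<and> r \<le> R}"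

text \<open>Keys of the pair (D^X, D^Y): prefix 0 for the X-array, 1 for the Y-array.\<close>
definition arr_keys :: "nat \<Rightarrow> nat \<Rightarrow> nat \<Rightarrow> nat list set" where
  "arr_keys n m R = {s # k | s k. s < 2 \<and> k \<in> Dkeys n m R}"

definition Dfeat :: "('a \<Rightarrow> 'a \<Rightarrow> real) \<Rightarrow> ('a \<Rightarrow> 'a) \<Rightarrow> (nat \<Rightarrow> 'a) \<Rightarrow> (nat \<Rightarrow> 'a)
    \<Rightarrow> nat list \<Rightarrow> real" where
  "Dfeat d T anc x k =
     (if k ! 0 = 0 then d ((T ^^ (k ! 3)) (x (k ! 1))) ((T ^^ (k ! 4)) (x (k ! 2)))
      else d ((T ^^ (k ! 2)) (x (k ! 1))) (anc (k ! 3)))"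

definition Phi_tilde :: "('a \<Rightarrow> 'a \<Rightarrow> real) \<Rightarrow> ('a \<Rightarrow> 'a) \<Rightarrow> (nat \<Rightarrow> 'a) \<Rightarrow> (nat \<Rightarrow> 'a)
    \<Rightarrow> nat \<Rightarrow> nat \<Rightarrow> nat \<Rightarrow> ('a \<times> 'a) measure \<Rightarrow> (nat list \<Rightarrow> real) measure" where
  "Phi_tilde d T a b n m R l =
     distr (PiM {..<n} (\<lambda>_. l)) (PiM (arr_keys n m R) (\<lambda>_. borel))
       (\<lambda>z. \<lambda>k\<in>arr_keys n m R.
           if hd k = 0 then Dfeat d T a (fst \<circ> z) (tl k) else Dfeat d T b (snd \<circ> z) (tl k))"

definition eucl_dist :: "nat list set \<Rightarrow> (nat list \<Rightarrow> real) \<Rightarrow> (nat list \<Rightarrow> real) \<Rightarrow> real" where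
  "eucl_dist K u v = sqrt (\<Sum>k\<in>K. (u k - v k)\<^sup>2)"

definition couplings :: "'b measure \<Rightarrow> 'b measure \<Rightarrow> ('b \<times> 'b) measure set" where
  "couplings P Q = {c. prob_space c \<and> sets c = sets (P \<Otimes>\<^sub>M Q)
      \<and> distr c P fst = P \<and> distr c Q snd = Q}"

definition wasserstein :: "('b \<Rightarrow> 'b \<Rightarrow> real) \<Rightarrow> real \<Rightarrow> 'b measure \<Rightarrow> 'b measure \<Rightarrow> ennreal" where
  "wasserstein \<rho> p P Q =
     (let w = (INF c\<in>couplings P Q. \<integral>\<^sup>+ z. ennreal (\<rho> (fst z) (snd z) powr p) \<partial>c)
      in if w = \<top> then \<top> else ennreal (enn2real w powr (1 / p)))"

definition Dep_tilde :: "'a measure \<Rightarrow> ('a \<Rightarrow> 'a) \<Rightarrow> ('a \<Rightarrow> 'a \<Rightarrow> real) \<Rightarrow> (nat \<Rightarrow> 'a)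
    \<Rightarrow> (nat \<Rightarrow> 'a) \<Rightarrow> nat \<Rightarrow> nat \<Rightarrow> nat \<Rightarrow> real \<Rightarrow> ennreal" where
  "Dep_tilde M T d a b n m R p =
     (SUP l\<in>joinings M T. wasserstein (eucl_dist (arr_keys n m R)) p
          (Phi_tilde d T a b n m R l) (Phi_tilde d T a b n m R (M \<Otimes>\<^sub>M M)))"

end

theory Submission
  imports Defs "HOL-Library.Nat_Bijection"
begin


definition wt :: "int \<Rightarrow> real" where "wt k = 2 powr (- \<bar>real_of_int k\<bar> - 2)"

lemma wt_pos: "wt k > 0" by (simp add: wt_def algebra_simps)

lemma wt_nonneg_part: "(wt has_sum (1/2)) {k. k \<ge> 0}"
proof -
  have e: "{k::int. k \<ge> 0} = int ` UNIV" by (auto intro: nonneg_int_cases)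
  have "(\<lambda>n::nat. (1/4) * (1/2::real)^n) sums ((1/4) * (1 / (1 - 1/2)))"
    by (intro sums_mult geometric_sums) simp
  hence s: "(\<lambda>n::nat. (1/4) * (1/2::real)^n) sums (1/2)" by simp
  have eq: "(wt \<circ> int) n = (1/4) * (1/2::real)^n" for n
  proof -
    have "(wt \<circ> int) n = 2 powr (- real n - 2)" by (simp add: wt_def algebra_simps)
    also have "\<dots> = 2 powr (-2) * 2 powr (- real n)" by (simp add: powr_add[symmetric] algebra_simps)
    also have "2 powr (- real n) = (1/2::real)^n"
      by (simp add: powr_minus powr_realpow power_one_over inverse_eq_divide)
    finally show ?thesis by (simp add: powr_minus)
  qed
  have "((wt \<circ> int) has_sum (1/2)) UNIV"
    unfolding eq[abs_def] by (rule sums_nonneg_imp_has_sum[OF s]) simp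
  then show ?thesis unfolding e by (subst has_sum_reindex) (auto simp: inj_on_def)
qed

lemma wt_neg_part: "(wt has_sum (1/4)) {k. k < 0}"
proof -
  have e: "{k::int. k < 0} = (\<lambda>n::nat. - int n - 1) ` UNIV"
  proof (auto)
    fix k :: int assume "k < 0"
    then show "k \<in> range (\<lambda>n::nat. - int n - 1)"
      by (intro image_eqI[of _ _ "nat (- k - 1)"]) auto
  qed
  have "(\<lambda>n::nat. (1/8) * (1/2::real)^n) sums ((1/8) * (1 / (1 - 1/2)))"
    by (intro sums_mult geometric_sums) simp
  hence s: "(\<lambda>n::nat. (1/8) * (1/2::real)^n) sums (1/4)" by simp
  have eq: "(wt \<circ> (\<lambda>n::nat. - int n - 1)) n = (1/8) * (1/2::real)^n" for n
  proof -
    have "(wt \<circ> (\<lambda>n::nat. - int n - 1)) n = 2 powr (- real n - 3)" by (simp add: wt_def algebra_simps)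
    also have "\<dots> = 2 powr (-3) * 2 powr (- real n)" by (simp add: powr_add[symmetric] algebra_simps)
    also have "2 powr (- real n) = (1/2::real)^n"
      by (simp add: powr_minus powr_realpow power_one_over inverse_eq_divide)
    finally show ?thesis by (simp add: powr_minus)
  qed
  have "((wt \<circ> (\<lambda>n::nat. - int n - 1)) has_sum (1/4)) UNIV"
    unfolding eq[abs_def] by (rule sums_nonneg_imp_has_sum[OF s]) simp
  then show ?thesis unfolding e by (subst has_sum_reindex) (auto simp: inj_on_def)
qed

lemma wt_has_sum: "(wt has_sum (3/4)) UNIV"
proof -
  have "(wt has_sum (1/2 + 1/4)) ({k. k \<ge> 0} \<union> {k. k < 0})"
    by (rule has_sum_Un_disjoint[OF wt_nonneg_part wt_neg_part]) auto
  moreover have "{k::int. k \<ge> 0} \<union> {k. k < 0} = UNIV" by auto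
  ultimately show ?thesis by simp
qed

lemma wt_summable: "wt summable_on UNIV" using wt_has_sum summable_on_def by blast

definition gx :: "bseq \<Rightarrow> int \<Rightarrow> real" where "gx x k = wt k * of_bool (x k)"

lemma gx_summable: "gx x summable_on UNIV"
  by (rule summable_on_comparison_test[OF wt_summable]) (auto simp: gx_def wt_def)

lemma cd0: "cantor_dist x (\<lambda>_. False) = infsum (gx x) UNIV"
  unfolding cantor_dist_def gx_def wt_def by simp

lemma cd_self: "cantor_dist x x = 0"
  unfolding cantor_dist_def by simp

definition KK :: "int set" where "KK = {-1,0,1}"

lemma sum_wt_KK: "sum wt KK = 1/2"
proof -
  have a: "wt (-1) = 1/8" "wt 0 = 1/4" "wt 1 = 1/8"
    by (simp_all add: wt_def powr_minus powr_numeral[symmetric] del: powr_numeral)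
  show ?thesis by (simp add: KK_def a)
qed

lemma cd_lower:
  assumes "\<forall>k\<in>KK. x k"
  shows "cantor_dist x (\<lambda>_. False) \<ge> 1/2"
proof -
  have "infsum (gx x) KK \<le> infsum (gx x) UNIV"
    by (rule infsum_mono_neutral) (auto simp: KK_def gx_summable gx_def wt_def)
  moreover have "infsum (gx x) KK = sum wt KK"
    using assms by (simp add: KK_def gx_def)
  ultimately show ?thesis by (simp add: cd0 sum_wt_KK)
qed

lemma wt_rest: "infsum wt (UNIV - KK) = 1/4"
proof -
  have s: "wt summable_on (UNIV - KK)" by (rule summable_on_subset_banach[OF wt_summable]) auto
  have "(wt has_sum (infsum wt (UNIV - KK) + sum wt KK)) ((UNIV - KK) \<union> KK)"
    by (rule has_sum_Un_disjoint[OF has_sum_infsum[OF s] has_sum_finite]) (auto simp: KK_def)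
  moreover have "(UNIV - KK) \<union> KK = UNIV" by auto
  ultimately have "infsum wt (UNIV - KK) + sum wt KK = 3/4"
    using wt_has_sum has_sum_unique by metis
  then show ?thesis by (simp add: sum_wt_KK)
qed

lemma cd_upper:
  assumes "\<forall>k\<in>KK. \<not> x k"
  shows "cantor_dist x (\<lambda>_. False) \<le> 1/4"
proof -
  have "infsum (gx x) UNIV \<le> infsum wt (UNIV - KK)"
    by (rule infsum_mono_neutral)
       (use assms in \<open>auto simp: gx_summable gx_def wt_def intro: summable_on_subset_banach[OF wt_summable]\<close>)
  then show ?thesis by (simp add: cd0 wt_rest)
qed



lemma bern_prob: "prob_space bern_meas"
  unfolding bern_meas_def by (intro prob_space_PiM prob_space_measure_pmf)

lemma space_bern[simp]: "space bern_meas = UNIV"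
  unfolding bern_meas_def by (simp add: space_PiM)

lemma comp_meas: "(\<lambda>x. x k) \<in> measurable bern_meas (count_space UNIV)"
proof -
  have "(\<lambda>x. x k) \<in> measurable bern_meas (measure_pmf (bernoulli_pmf (1/2)))"
    unfolding bern_meas_def by (rule measurable_component_singleton) simp
  then show ?thesis by (simp add: measurable_cong_sets[OF refl sets_measure_pmf_count_space])
qed

lemma shift_distr: "distr bern_meas bern_meas shift = bern_meas"
proof -
  have "distr (PiM UNIV (\<lambda>_::int. measure_pmf (bernoulli_pmf (1/2))))
     (PiM UNIV (\<lambda>i::int. (\<lambda>_::int. measure_pmf (bernoulli_pmf (1/2))) (i + 1)))
     (\<lambda>\<omega>. \<lambda>n\<in>UNIV. \<omega> (n + 1)) = (PiM UNIV (\<lambda>i::int. (\<lambda>_::int. measure_pmf (bernoulli_pmf (1/2))) (i + 1)))"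
    by (rule distr_PiM_reindex) (auto simp: prob_space_measure_pmf inj_on_def)
  moreover have "(\<lambda>\<omega>::bseq. \<lambda>n\<in>UNIV. \<omega> (n + 1)) = shift"
    by (auto simp: shift_def fun_eq_iff)
  ultimately show ?thesis by (simp add: bern_meas_def)
qed

lemma shift_meas: "shift \<in> measurable bern_meas bern_meas"
proof -
  have "(\<lambda>x. \<lambda>k. x (k + 1)) \<in> measurable bern_meas (PiM UNIV (\<lambda>_::int. measure_pmf (bernoulli_pmf (1/2))))"
  proof (rule measurable_PiM_single')
    fix i :: int
    show "(\<lambda>x. x (i + 1)) \<in> measurable bern_meas (measure_pmf (bernoulli_pmf (1/2)))"
      unfolding bern_meas_def by (rule measurable_component_singleton) simp
  qed (simp add: space_PiM)
  then show ?thesis by (simp add: shift_def[abs_def] bern_meas_def[symmetric])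
qed

lemma cd_meas: "(\<lambda>x. cantor_dist x (\<lambda>_. False)) \<in> borel_measurable bern_meas"
proof -
  have "cantor_dist x (\<lambda>_. False) = (\<Sum>n. gx x (int_decode n))" for x
  proof -
    have "((\<lambda>n. gx x (int_decode n)) has_sum infsum (gx x) UNIV) UNIV"
      using has_sum_reindex_bij_betw[OF bij_int_decode, of "gx x"] gx_summable[of x]
      by (simp add: has_sum_infsum)
    then show ?thesis by (simp add: cd0 sums_unique has_sum_imp_sums)
  qed
  moreover have "(\<lambda>x. \<Sum>n. gx x (int_decode n)) \<in> borel_measurable bern_meas"
  proof -
    note comp_meas[measurable]
    show ?thesis unfolding gx_def by measurable
  qed
  ultimately show ?thesis by simp
qed



abbreviation "BB \<equiv> bern_meas \<Otimes>\<^sub>M bern_meas"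

definition diag :: "(bseq \<times> bseq) measure" where
  "diag = distr bern_meas BB (\<lambda>x. (x, x))"

lemma diag_meas: "(\<lambda>x. (x, x)) \<in> measurable bern_meas BB"
  by (intro measurable_Pair measurable_ident_sets refl)

lemma mp_meas: "map_prod shift shift \<in> measurable BB BB"
proof -
  have "(\<lambda>z. (shift (fst z), shift (snd z))) \<in> measurable BB BB"
    by (intro measurable_Pair measurable_compose[OF measurable_fst shift_meas] measurable_compose[OF measurable_snd shift_meas])
  moreover have "(\<lambda>z. (shift (fst z), shift (snd z))) = map_prod shift shift" by (auto simp: fun_eq_iff)
  ultimately show ?thesis by simp
qed

lemma diag_join: "diag \<in> joinings bern_meas shift"
proof -
  interpret B: prob_space bern_meas by (rule bern_prob)
  have 1: "prob_space diag" unfolding diag_def by (rule B.prob_space_distr[OF diag_meas])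
  have 2: "sets diag = sets BB" by (simp add: diag_def)
  have 3: "distr diag bern_meas fst = bern_meas"
    unfolding diag_def by (subst distr_distr) (auto simp: diag_meas comp_def distr_id)
  have 4: "distr diag bern_meas snd = bern_meas"
    unfolding diag_def by (subst distr_distr) (auto simp: diag_meas comp_def distr_id)
  have "distr diag BB (map_prod shift shift) = distr bern_meas BB ((\<lambda>x. (x,x)) \<circ> shift)"
    unfolding diag_def
    by (subst distr_distr) (auto simp: diag_meas comp_def mp_meas)
  also have "\<dots> = distr (distr bern_meas bern_meas shift) BB (\<lambda>x. (x,x))"
    by (subst distr_distr) (auto simp: diag_meas shift_meas)
  also have "\<dots> = diag" by (simp add: shift_distr diag_def)
  finally show ?thesis using 1 2 3 4 by (simp add: joinings_def)
qed



abbreviation "KA \<equiv> arr_keys 1 1 1"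
abbreviation "k1 \<equiv> [0,1,0,0,1::nat]"
abbreviation "k3 \<equiv> [1,1,0,0,1::nat]"
abbreviation "z0 \<equiv> (\<lambda>_::int. False)"

lemma DK_eq: "Dkeys 1 1 1 = {[0,0,0,0,0],[1,0,0,1]}"
  unfolding Dkeys_def by auto

lemma KA_eq: "KA = {[0,0,0,0,0,0], k1, [1,0,0,0,0,0], k3}"
proof -
  have "s < 2 \<longleftrightarrow> s = 0 \<or> s = (1::nat)" for s by auto
  then show ?thesis unfolding arr_keys_def DK_eq by blast
qed

lemma KA_fin: "finite KA" unfolding KA_eq by simp

definition Fm :: "(nat \<Rightarrow> bseq) \<Rightarrow> (nat \<Rightarrow> bseq) \<Rightarrow> (nat \<Rightarrow> bseq \<times> bseq) \<Rightarrow> nat list \<Rightarrow> real" where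
  "Fm a b = (\<lambda>z. \<lambda>k\<in>KA.
           if hd k = 0 then Dfeat cantor_dist shift a (fst \<circ> z) (tl k) else Dfeat cantor_dist shift b (snd \<circ> z) (tl k))"

lemma Phi_eq: "Phi_tilde cantor_dist shift a b 1 1 1 l = distr (PiM {..<1} (\<lambda>_. l)) (PiM KA (\<lambda>_. borel)) (Fm a b)"
  unfolding Phi_tilde_def Fm_def ..

lemma Fm_val:
  assumes "a 1 = z0" "b 1 = z0" "k \<in> KA"
  shows "Fm a b z k = (if k = k1 then cantor_dist (fst (z 0)) z0 else if k = k3 then cantor_dist (snd (z 0)) z0 else 0)"
proof -
  have kk: "k \<in> KA" by fact
  have kin: "k \<in> {[0,0,0,0,0,0], k1, [1,0,0,0,0,0], k3}" using assms(3) unfolding KA_eq .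
  have a1': "a (Suc 0) = z0" and b1': "b (Suc 0) = z0" using assms(1,2) by simp_all
  have "Fm a b z k = (if hd k = 0 then Dfeat cantor_dist shift a (fst \<circ> z) (tl k) else Dfeat cantor_dist shift b (snd \<circ> z) (tl k))"
    unfolding Fm_def using kk by (simp only: restrict_apply')
  then show ?thesis
    using kin by (elim insertE emptyE) (simp_all add: Dfeat_def cd_self a1' b1')
qed

lemma Fm_meas:
  assumes "a 1 = z0" "b 1 = z0" "sets l = sets BB"
  shows "Fm a b \<in> measurable (PiM {..<1} (\<lambda>_. l)) (PiM KA (\<lambda>_. borel))"
proof -
  have c0: "(\<lambda>z. z 0) \<in> measurable (PiM {..<1::nat} (\<lambda>_. l)) BB"
  proof -
    have "(\<lambda>z. z 0) \<in> measurable (PiM {..<1::nat} (\<lambda>_. l)) l" by (rule measurable_component_singleton) simp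
    then show ?thesis by (simp only: measurable_cong_sets[OF refl assms(3)])
  qed
  have m1: "(\<lambda>z. cantor_dist (fst (z 0)) z0) \<in> borel_measurable (PiM {..<1::nat} (\<lambda>_. l))"
    by (rule measurable_compose[OF measurable_compose[OF c0 measurable_fst] cd_meas])
  have m3: "(\<lambda>z. cantor_dist (snd (z 0)) z0) \<in> borel_measurable (PiM {..<1::nat} (\<lambda>_. l))"
    by (rule measurable_compose[OF measurable_compose[OF c0 measurable_snd] cd_meas])
  have eq: "Fm a b = (\<lambda>z. \<lambda>k\<in>KA. (if k = k1 then cantor_dist (fst (z 0)) z0 else if k = k3 then cantor_dist (snd (z 0)) z0 else 0))"
  proof (intro ext)
    fix z k
    show "Fm a b z k = (\<lambda>k\<in>KA. (if k = k1 then cantor_dist (fst (z 0)) z0 else if k = k3 then cantor_dist (snd (z 0)) z0 else 0)) k"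
    proof (cases "k \<in> KA")
      case True
      then show ?thesis using Fm_val[of a b k z, OF assms(1,2)] by simp
    next
      case False
      then show ?thesis by (simp add: Fm_def)
    qed
  qed
  show ?thesis unfolding eq
  proof (rule measurable_restrict)
    fix k :: "nat list"
    show "(\<lambda>z. if k = k1 then cantor_dist (fst (z 0)) z0 else if k = k3 then cantor_dist (snd (z 0)) z0 else 0)
       \<in> borel_measurable (PiM {..<1::nat} (\<lambda>_. l))"
    proof (cases "k = k1")
      case True then show ?thesis using m1 by (simp only: True simp_thms if_True)
    next
      case F1: False
      show ?thesis
      proof (cases "k = k3")
        case True then show ?thesis using m3 F1 by (simp only: True simp_thms if_True if_False)
      next
        case False then show ?thesis using F1 by simp
      qed
    qed
  qed
qed



abbreviation "PK \<equiv> PiM KA (\<lambda>_. (borel :: real measure))"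

lemma u1_meas[measurable]: "(\<lambda>u. u k1) \<in> borel_measurable PK"
  by (rule measurable_component_singleton) (unfold KA_eq, simp)
lemma u3_meas[measurable]: "(\<lambda>u. u k3) \<in> borel_measurable PK"
  by (rule measurable_component_singleton) (unfold KA_eq, simp)

lemma k1_in: "k1 \<in> KA" unfolding KA_eq by simp
lemma k3_in: "k3 \<in> KA" unfolding KA_eq by simp

definition "E1 = {u \<in> space PK. u k1 \<noteq> u k3}"
definition "E2 = {u \<in> space PK. u k1 \<ge> 1/2 \<and> u k3 \<le> 1/4}"

lemma E1_sets: "E1 \<in> sets PK"
proof -
  have "(\<lambda>u. u k1 - u k3) \<in> borel_measurable PK" using u1_meas u3_meas by (rule borel_measurable_diff)
  moreover have "-{0::real} \<in> sets borel" by (rule borel_open) (simp add: open_Compl)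
  ultimately have "(\<lambda>u. u k1 - u k3) -` (-{0::real}) \<inter> space PK \<in> sets PK" by (rule measurable_sets)
  moreover have "(\<lambda>u. u k1 - u k3) -` (-{0::real}) \<inter> space PK = E1" by (auto simp: E1_def)
  ultimately show ?thesis by simp
qed
lemma E2_sets: "E2 \<in> sets PK" unfolding E2_def by measurable

lemma BB_prob: "prob_space BB"
  by (intro prob_space_pair bern_prob)

lemma diag_prob: "prob_space diag"
  using diag_join by (simp add: joinings_def)

lemma bern_Cs: "{x. \<forall>k\<in>KK. x k = v} \<in> sets bern_meas"
proof -
  have Ci: "{x. x k = v} \<in> sets bern_meas" for k
  proof -
    have "(\<lambda>x. x k) -` {v} \<inter> space bern_meas \<in> sets bern_meas"
      by (rule measurable_sets[OF comp_meas]) simp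
    moreover have "(\<lambda>x. x k) -` {v} \<inter> space bern_meas = {x. x k = v}" by auto
    ultimately show ?thesis by simp
  qed
  have "{x. \<forall>k\<in>KK. x k = v} = (\<Inter>k\<in>KK. {x. x k = v})" by (auto simp: KK_def)
  moreover have "(\<Inter>k\<in>KK. {x. x k = v}) \<in> sets bern_meas"
    by (rule sets.finite_INT) (auto simp: KK_def Ci)
  ultimately show ?thesis by simp
qed

lemma bern_C: "emeasure bern_meas {x. \<forall>k\<in>KK. x k = v} = ennreal (1/8)"
proof -
  interpret product_prob_space "\<lambda>_::int. measure_pmf (bernoulli_pmf (1/2))" UNIV
    by unfold_locales
  have "{x. \<forall>k\<in>KK. x k = v} = {x\<in>space bern_meas. \<forall>i\<in>KK. x i \<in> {v}}" by auto
  then have "emeasure bern_meas {x. \<forall>k\<in>KK. x k = v} = (\<Prod>i\<in>KK. emeasure (measure_pmf (bernoulli_pmf (1/2))) {v})"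
    unfolding bern_meas_def
    by (simp only:) (rule emeasure_PiM_Collect, auto simp: KK_def)
  also have "\<dots> = (\<Prod>i\<in>KK. ennreal (1/2))"
    by (intro prod.cong refl) (cases v, auto simp: emeasure_pmf_single)
  also have "\<dots> = ennreal (1/2) ^ card KK" by (rule prod_constant)
  also have "card KK = 3" by (simp add: KK_def)
  also have "ennreal (1/2) ^ 3 = ennreal ((1/2) ^ 3)" by (subst ennreal_power) auto
  also have "(1/2::real) ^ 3 = 1/8" by (simp add: eval_nat_numeral)
  finally show ?thesis .
qed

lemma Q_pos:
  assumes a1: "a 1 = z0" and b1: "b 1 = z0"
  shows "emeasure (Phi_tilde cantor_dist shift a b 1 1 1 BB) E2 \<ge> ennreal (1/64)"
proof -
  interpret BBp: prob_space BB by (rule BB_prob)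
  interpret product_prob_space "\<lambda>_::nat. BB" "{..<1}" by unfold_locales
  define C where "C = {x::bseq. \<forall>k\<in>KK. x k = True}"
  define D where "D = {x::bseq. \<forall>k\<in>KK. x k = False}"
  have Cs: "C \<in> sets bern_meas" and Ds: "D \<in> sets bern_meas"
    unfolding C_def D_def by (rule bern_Cs)+
  have Fm: "Fm a b \<in> measurable (PiM {..<1::nat} (\<lambda>_. BB)) PK"
    by (rule Fm_meas[of a b, OF a1 b1]) simp
  have "emeasure (Phi_tilde cantor_dist shift a b 1 1 1 BB) E2
      = emeasure (PiM {..<1::nat} (\<lambda>_. BB)) (Fm a b -` E2 \<inter> space (PiM {..<1::nat} (\<lambda>_. BB)))"
    unfolding Phi_eq by (rule emeasure_distr[OF Fm E2_sets])
  also have "\<dots> \<ge> emeasure (PiM {..<1::nat} (\<lambda>_. BB)) {z \<in> space (PiM {..<1::nat} (\<lambda>_. BB)). z 0 \<in> C \<times> D}"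
  proof (rule emeasure_mono)
    show "Fm a b -` E2 \<inter> space (PiM {..<1::nat} (\<lambda>_. BB)) \<in> sets (PiM {..<1::nat} (\<lambda>_. BB))"
      using Fm E2_sets by (rule measurable_sets)
    show "{z \<in> space (PiM {..<1::nat} (\<lambda>_. BB)). z 0 \<in> C \<times> D} \<subseteq> Fm a b -` E2 \<inter> space (PiM {..<1::nat} (\<lambda>_. BB))"
    proof
      fix z assume zz: "z \<in> {z \<in> space (PiM {..<1::nat} (\<lambda>_. BB)). z 0 \<in> C \<times> D}"
      then have z: "z \<in> space (PiM {..<1::nat} (\<lambda>_. BB))" "z 0 \<in> C \<times> D" by auto
      have "Fm a b z \<in> space PK" using measurable_space[OF Fm z(1)] .
      moreover have "Fm a b z k1 \<ge> 1/2"
        using z(2) Fm_val[of a b k1 z, OF a1 b1 k1_in] cd_lower[of "fst (z 0)"]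
        by (auto simp: KA_eq C_def mem_Times_iff)
      moreover have "Fm a b z k3 \<le> 1/4"
        using z(2) Fm_val[of a b k3 z, OF a1 b1 k3_in] cd_upper[of "snd (z 0)"]
        by (auto simp: KA_eq D_def mem_Times_iff)
      ultimately show "z \<in> Fm a b -` E2 \<inter> space (PiM {..<1::nat} (\<lambda>_. BB))" using z(1) by (simp add: E2_def)
    qed
  qed
  also have "emeasure (PiM {..<1::nat} (\<lambda>_. BB)) {z \<in> space (PiM {..<1::nat} (\<lambda>_. BB)). z 0 \<in> C \<times> D} = emeasure BB (C \<times> D)"
    by (rule emeasure_PiM_Collect_single) (auto simp: Cs Ds)
  also have "\<dots> = emeasure bern_meas C * emeasure bern_meas D"
  proof -
    interpret Bp: prob_space bern_meas by (rule bern_prob)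
    show ?thesis by (rule Bp.emeasure_pair_measure_Times[OF Cs Ds])
  qed
  also have "\<dots> = ennreal (1/64)"
    using bern_C[of True] bern_C[of False] by (simp add: C_def D_def ennreal_mult[symmetric])
  finally show ?thesis .
qed

lemma P_zero:
  assumes a1: "a 1 = z0" and b1: "b 1 = z0"
  shows "emeasure (Phi_tilde cantor_dist shift a b 1 1 1 diag) E1 = 0"
proof -
  interpret Dp: prob_space diag by (rule diag_prob)
  interpret product_prob_space "\<lambda>_::nat. diag" "{..<1}" by unfold_locales
  have sd: "sets diag = sets BB" by (simp add: diag_def)
  have Fm: "Fm a b \<in> measurable (PiM {..<1::nat} (\<lambda>_. diag)) PK"
    by (rule Fm_meas[of a b, OF a1 b1 sd])
  have f1[measurable]: "(\<lambda>w. cantor_dist (fst w) z0) \<in> borel_measurable diag"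
    by (rule measurable_compose[OF _ cd_meas]) (simp add: measurable_cong_sets[OF sd refl])
  have f2[measurable]: "(\<lambda>w. cantor_dist (snd w) z0) \<in> borel_measurable diag"
    by (rule measurable_compose[OF _ cd_meas]) (simp add: measurable_cong_sets[OF sd refl])
  define A where "A = {w \<in> space diag. cantor_dist (fst w) z0 \<noteq> cantor_dist (snd w) z0}"
  have As: "A \<in> sets diag" unfolding A_def by measurable
  have "emeasure (Phi_tilde cantor_dist shift a b 1 1 1 diag) E1
      = emeasure (PiM {..<1::nat} (\<lambda>_. diag)) (Fm a b -` E1 \<inter> space (PiM {..<1::nat} (\<lambda>_. diag)))"
    unfolding Phi_eq by (rule emeasure_distr[OF Fm E1_sets])
  also have "\<dots> \<le> emeasure (PiM {..<1::nat} (\<lambda>_. diag)) {z \<in> space (PiM {..<1::nat} (\<lambda>_. diag)). z 0 \<in> A}"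
  proof (rule emeasure_mono)
    show "{z \<in> space (PiM {..<1::nat} (\<lambda>_. diag)). z 0 \<in> A} \<in> sets (PiM {..<1::nat} (\<lambda>_. diag))"
      using As by (intro sets_Collect_single) auto
    show "Fm a b -` E1 \<inter> space (PiM {..<1::nat} (\<lambda>_. diag)) \<subseteq> {z \<in> space (PiM {..<1::nat} (\<lambda>_. diag)). z 0 \<in> A}"
    proof safe
      fix z assume z: "z \<in> space (PiM {..<1::nat} (\<lambda>_. diag))" "Fm a b z \<in> E1"
      have "z 0 \<in> space diag" using z(1) by (auto simp: space_PiM)
      then show "z 0 \<in> A"
        using z(2) Fm_val[of a b k1 z, OF a1 b1 k1_in] Fm_val[of a b k3 z, OF a1 b1 k3_in]
        by (auto simp: KA_eq E1_def A_def)
    qed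
  qed
  also have "\<dots> = emeasure diag A"
    by (rule emeasure_PiM_Collect_single) (auto simp: As)
  also have "\<dots> = emeasure bern_meas ((\<lambda>x. (x, x)) -` A \<inter> space bern_meas)"
    unfolding diag_def by (rule emeasure_distr[OF diag_meas]) (use As in \<open>simp add: diag_def\<close>)
  also have "(\<lambda>x. (x, x)) -` A \<inter> space bern_meas = {}" by (auto simp: A_def)
  finally show ?thesis by simp
qed



lemma sq_bound:
  fixes w s t :: real
  assumes "s \<ge> 1/2" "t \<le> 1/4"
  shows "(w - s)^2 + (w - t)^2 \<ge> 1/64"
proof -
  have h1: "0 \<le> (2*w - s - t)^2" by simp
  have h2: "1/4 \<le> s - t" using assms by simp
  have h3: "(1/4)^2 \<le> (s-t)^2" by (rule power_mono) (use h2 in auto)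
  have e: "2*((w-s)^2+(w-t)^2) = (2*w-s-t)^2 + (s-t)^2" by (simp add: power2_eq_square algebra_simps)
  have h4: "(1/4::real)^2 = 1/16" by (simp add: power2_eq_square)
  have h5: "1/16 \<le> (s-t)^2" using h3 h4 by simp
  have gen: "1/64 \<le> X+Y" if "2*(X+Y) = Z + S" "0 \<le> Z" "1/16 \<le> S" for X Y Z S :: real using that by (simp add: field_simps)
  show ?thesis by (rule gen[OF e h1 h5])
qed

lemma dist_bound:
  assumes "u k1 = u k3" "v k1 \<ge> 1/2" "v k3 \<le> 1/4"
  shows "eucl_dist KA u v \<ge> 1/8"
proof -
  have "(\<Sum>k\<in>{k1,k3}. (u k - v k)^2) \<le> (\<Sum>k\<in>KA. (u k - v k)^2)"
    using KA_fin k1_in k3_in by (intro sum_mono2) auto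
  moreover have "(\<Sum>k\<in>{k1,k3}. (u k - v k)^2) = (u k3 - v k1)^2 + (u k3 - v k3)^2"
    using assms(1) by simp
  moreover have "(u k3 - v k1)^2 + (u k3 - v k3)^2 \<ge> 1/64"
    by (rule sq_bound) (use assms in auto)
  ultimately have "(1/8)^2 \<le> (\<Sum>k\<in>KA. (u k - v k)^2)" by (simp add: power2_eq_square)
  then show ?thesis unfolding eucl_dist_def by (rule real_le_rsqrt)
qed

lemma coupling_bound:
  assumes a1: "a 1 = z0" and b1: "b 1 = z0" and p: "p \<ge> 1"
    and c: "c \<in> couplings (Phi_tilde cantor_dist shift a b 1 1 1 diag) (Phi_tilde cantor_dist shift a b 1 1 1 BB)"
  shows "(\<integral>\<^sup>+ z. ennreal (eucl_dist KA (fst z) (snd z) powr p) \<partial>c) \<ge> ennreal ((1/8) powr p) * ennreal (1/64)"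
proof -
  define P where "P = Phi_tilde cantor_dist shift a b 1 1 1 diag"
  define Q where "Q = Phi_tilde cantor_dist shift a b 1 1 1 BB"
  have sc: "sets c = sets (P \<Otimes>\<^sub>M Q)" and mP: "distr c P fst = P" and mQ: "distr c Q snd = Q"
    using c by (auto simp: couplings_def P_def Q_def)
  have sP: "sets P = sets PK" unfolding P_def Phi_eq by simp
  have sQ: "sets Q = sets PK" unfolding Q_def Phi_eq by simp
  have spc: "space c = space PK \<times> space PK"
    using sets_eq_imp_space_eq[OF sc] sets_eq_imp_space_eq[OF sP] sets_eq_imp_space_eq[OF sQ]
    by (simp add: space_pair_measure)
  have mf: "fst \<in> measurable c P" by (simp add: measurable_cong_sets[OF sc refl])
  have ms: "snd \<in> measurable c Q" by (simp add: measurable_cong_sets[OF sc refl])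
  have E1P: "E1 \<in> sets P" using E1_sets sP by simp
  have E2Q: "E2 \<in> sets Q" using E2_sets sQ by simp
  define G1 where "G1 = fst -` E1 \<inter> space c"
  define G2 where "G2 = snd -` E2 \<inter> space c"
  have G1s: "G1 \<in> sets c" unfolding G1_def using mf E1P by (rule measurable_sets)
  have G2s: "G2 \<in> sets c" unfolding G2_def using ms E2Q by (rule measurable_sets)
  have "emeasure c G1 = emeasure P E1"
    using emeasure_distr[OF mf E1P] unfolding mP G1_def by simp
  also have "\<dots> = 0" unfolding P_def by (rule P_zero[of a b, OF a1 b1])
  finally have G1n: "G1 \<in> null_sets c" using G1s by auto
  have "emeasure c G2 = emeasure Q E2"
    using emeasure_distr[OF ms E2Q] unfolding mQ G2_def by simp
  also have "\<dots> \<ge> ennreal (1/64)" unfolding Q_def by (rule Q_pos[of a b, OF a1 b1])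
  finally have G2b: "emeasure c (G2 - G1) \<ge> ennreal (1/64)"
    using emeasure_Diff_null_set[OF G1n G2s] by simp
  have "ennreal ((1/8) powr p) * ennreal (1/64) \<le> ennreal ((1/8) powr p) * emeasure c (G2 - G1)"
    by (rule mult_left_mono[OF G2b]) simp
  also have "\<dots> = (\<integral>\<^sup>+ z. ennreal ((1/8) powr p) * indicator (G2 - G1) z \<partial>c)"
    by (rule nn_integral_cmult_indicator[symmetric]) (use G1s G2s in auto)
  also have "\<dots> \<le> (\<integral>\<^sup>+ z. ennreal (eucl_dist KA (fst z) (snd z) powr p) \<partial>c)"
  proof (rule nn_integral_mono)
    fix z assume z: "z \<in> space c"
    show "ennreal ((1/8) powr p) * indicator (G2 - G1) z \<le> ennreal (eucl_dist KA (fst z) (snd z) powr p)"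
    proof (cases "z \<in> G2 - G1")
      case True
      then have "fst z \<notin> E1" "snd z \<in> E2" "fst z \<in> space PK" using z spc
        by (auto simp: G1_def G2_def mem_Times_iff)
      then have "eucl_dist KA (fst z) (snd z) \<ge> 1/8"
        by (intro dist_bound) (auto simp: E1_def E2_def)
      then have "(1/8) powr p \<le> eucl_dist KA (fst z) (snd z) powr p"
        by (intro powr_mono2) (use p in auto)
      then show ?thesis using True by (simp add: ennreal_leI)
    qed simp
  qed
  finally show ?thesis .
qed



theorem proposition22:
  fixes a b :: "nat \<Rightarrow> bseq" and p :: real
  assumes "dense_anchors cantor_dist a" and "dense_anchors cantor_dist b"
    and "a 1 = (\<lambda>_. False)" and "b 1 = (\<lambda>_. False)"
    and "p \<ge> 1"
  shows "Dep_tilde bern_meas shift cantor_dist a b 1 1 1 p > 0"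
proof -
  define \<epsilon> where "\<epsilon> = ennreal ((1/8) powr p) * ennreal (1/64)"
  have epos: "\<epsilon> > 0" and efin: "\<epsilon> \<noteq> \<top>"
    by (simp_all add: \<epsilon>_def ennreal_mult[symmetric])
  define w where "w = (INF c\<in>couplings (Phi_tilde cantor_dist shift a b 1 1 1 diag) (Phi_tilde cantor_dist shift a b 1 1 1 BB).
            \<integral>\<^sup>+ z. ennreal (eucl_dist KA (fst z) (snd z) powr p) \<partial>c)"
  have "\<epsilon> \<le> w" unfolding w_def \<epsilon>_def
    by (rule INF_greatest) (rule coupling_bound[of a b p, OF assms(3,4,5)])
  have W: "wasserstein (eucl_dist KA) p (Phi_tilde cantor_dist shift a b 1 1 1 diag)
             (Phi_tilde cantor_dist shift a b 1 1 1 BB) > 0"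
  proof -
    have Weq: "wasserstein (eucl_dist KA) p (Phi_tilde cantor_dist shift a b 1 1 1 diag)
             (Phi_tilde cantor_dist shift a b 1 1 1 BB) = (if w = \<top> then \<top> else ennreal (enn2real w powr (1/p)))"
      unfolding wasserstein_def w_def Let_def ..
    show ?thesis
  proof (cases "w = \<top>")
    case True then show ?thesis unfolding Weq by simp
  next
    case False
    have "enn2real \<epsilon> \<le> enn2real w" using \<open>\<epsilon> \<le> w\<close> False by (intro enn2real_mono) (auto simp: top.not_eq_extremum)
    moreover have "enn2real \<epsilon> > 0" using epos efin by (simp add: enn2real_positive_iff top.not_eq_extremum)
    ultimately have "enn2real w > 0" by simp
    then show ?thesis using False unfolding Weq by simp
  qed
  qed
  also have "\<dots> \<le> Dep_tilde bern_meas shift cantor_dist a b 1 1 1 p"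
    unfolding Dep_tilde_def by (rule SUP_upper[OF diag_join])
  finally show ?thesis .
qed


end
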